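(* Consider the Normal Partizan Domination game on the star $K_{1,n}$ ($n\geq 1$) in which every vertex has color $C$. Its value is $*$ if $n$ is odd and $*2$ if $n$ is even.
   Context: Normal Partizan Domination game: a finite graph $G$ has each vertex colored $A$, $B$ or $C$. Alice and Bob alternately select a vertex; Alice may only select vertices colored $A$ or $C$, Bob only vertices colored $B$ or $C$. A vertex $u$ dominates $v$ if $u=v$ or $uv$ is an edge. A vertex may be selected only if it is playable, i.e. it dominates at least one vertex not dominated by the previously selected vertices; the game ends when the selected vertices form a dominating set. Under normal play the player unable to move loses. The game is regarded as a partizan combinatorial game with Alice as Left and Bob as Right, and its value is its value in Conway's combinatorial game theory ($\{X\mid Y\}$ has Left options $X$ and Right options $Y$; $G=H$ iff $G+(-H)$ is a second-player win). Nimbers: $*=\{0\mid 0\}$, $*2=\{0,*\mid 0,*\}$. *)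

theory Defs
  imports Main
begin

datatype game = Game "game list" "game list"

primrec left_opts :: "game \<Rightarrow> game list" where
  "left_opts (Game L R) = L"
primrec right_opts :: "game \<Rightarrow> game list" where
  "right_opts (Game L R) = R"

text \<open>wins G = (Left moving first wins G, Right moving first wins G), normal play.\<close>
primrec wins :: "game \<Rightarrow> bool \<times> bool" where
  "wins (Game L R) =
     (list_ex (\<lambda>p. \<not> snd p) (map wins L), list_ex (\<lambda>p. \<not> fst p) (map wins R))"

definition second_player_win :: "game \<Rightarrow> bool" where
  "second_player_win G \<longleftrightarrow> \<not> fst (wins G) \<and> \<not> snd (wins G)"

primrec game_neg :: "game \<Rightarrow> game" where
  "game_neg (Game L R) = Game (map game_neg R) (map game_neg L)"

lemma game_size_mem:
  "x \<in> set L \<Longrightarrow> size x < size (Game L R)"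
  "x \<in> set R \<Longrightarrow> size x < size (Game L R)"
  by (auto dest: size_list_estimation'[of x _ _ size, OF _ order_refl])

function game_add :: "game \<Rightarrow> game \<Rightarrow> game" where
  "game_add (Game L R) (Game L' R') =
     Game (map (\<lambda>x. game_add x (Game L' R')) L @ map (\<lambda>y. game_add (Game L R) y) L')
          (map (\<lambda>x. game_add x (Game L' R')) R @ map (\<lambda>y. game_add (Game L R) y) R')"
  by pat_completeness auto
termination
  by (relation "measure (\<lambda>(x, y). size x + size y)")
     (auto dest: game_size_mem)

definition game_eq :: "game \<Rightarrow> game \<Rightarrow> bool" where
  "game_eq G H \<longleftrightarrow> second_player_win (game_add G (game_neg H))"

definition game_zero :: game where "game_zero = Game [] []"
definition game_star :: game where "game_star = Game [game_zero] [game_zero]"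
definition game_star2 :: game where
  "game_star2 = Game [game_zero, game_star] [game_zero, game_star]"

datatype color = ColA | ColB | ColC

definition cnbhd :: "nat set \<Rightarrow> (nat \<Rightarrow> nat \<Rightarrow> bool) \<Rightarrow> nat \<Rightarrow> nat set" where
  "cnbhd V E v = {u \<in> V. u = v \<or> E v u}"

definition playable :: "nat set \<Rightarrow> (nat \<Rightarrow> nat \<Rightarrow> bool) \<Rightarrow> nat set \<Rightarrow> nat \<Rightarrow> bool" where
  "playable V E D v \<longleftrightarrow> v \<in> V \<and> (\<exists>u \<in> cnbhd V E v. u \<notin> D)"

text \<open>The game from the position in which D is the set of vertices dominated so far.
  Alice (Left) may select vertices colored A or C, Bob (Right) those colored B or C.\<close>
function dom_game :: "nat set \<Rightarrow> (nat \<Rightarrow> nat \<Rightarrow> bool) \<Rightarrow> (nat \<Rightarrow> color) \<Rightarrow> nat set \<Rightarrow> game" where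
  "dom_game V E c D =
    (if finite V then
       Game (map (\<lambda>v. dom_game V E c (D \<union> cnbhd V E v))
                 (filter (\<lambda>v. c v \<noteq> ColB \<and> playable V E D v) (sorted_list_of_set V)))
            (map (\<lambda>v. dom_game V E c (D \<union> cnbhd V E v))
                 (filter (\<lambda>v. c v \<noteq> ColA \<and> playable V E D v) (sorted_list_of_set V)))
     else Game [] [])"
  by pat_completeness auto
termination
proof (relation "measure (\<lambda>(V, E, c, D). card (V - D))", goal_cases)
  case 1 then show ?case by simp
next
  case (2 V E c D v)
  then obtain u where "u \<in> cnbhd V E v" "u \<notin> D" by (auto simp: playable_def)
  then have "V - (D \<union> cnbhd V E v) \<subset> V - D" by (auto simp: cnbhd_def)
  with 2 show ?case by (simp add: psubset_card_mono)
next
  case (3 V E c D v)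
  then obtain u where "u \<in> cnbhd V E v" "u \<notin> D" by (auto simp: playable_def)
  then have "V - (D \<union> cnbhd V E v) \<subset> V - D" by (auto simp: cnbhd_def)
  with 3 show ?case by (simp add: psubset_card_mono)
qed

definition domination_game :: "nat set \<Rightarrow> (nat \<Rightarrow> nat \<Rightarrow> bool) \<Rightarrow> (nat \<Rightarrow> color) \<Rightarrow> game" where
  "domination_game V E c = dom_game V E c {}"

text \<open>The star K_{1,n}: vertex set {0..n}, centre 0 adjacent to each leaf 1..n.\<close>
definition star_edge :: "nat \<Rightarrow> nat \<Rightarrow> bool" where
  "star_edge i j \<longleftrightarrow> (i = 0 \<and> j \<noteq> 0) \<or> (j = 0 \<and> i \<noteq> 0)"

end

theory Submission
  imports Defs
begin

fun nimg :: "nat \<Rightarrow> game" where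
  "nimg 0 = game_zero" | "nimg (Suc 0) = game_star" | "nimg _ = game_star2"

lemma nimg_Game: "j \<le> 2 \<Longrightarrow> nimg j = Game (map nimg [0..<j]) (map nimg [0..<j])"
proof -
  assume "j \<le> 2"
  then have "j = 0 \<or> j = 1 \<or> j = 2" by linarith
  then show ?thesis
  proof (elim disjE)
    assume "j = 0" then show ?thesis by (simp add: game_zero_def)
  next
    assume "j = 1" then show ?thesis by (simp add: game_zero_def game_star_def)
  next
    assume "j = 2" then show ?thesis
      by (simp add: game_zero_def game_star_def game_star2_def numeral_2_eq_2)
  qed
qed

definition NV :: "game \<Rightarrow> nat \<Rightarrow> bool" where
  "NV G m \<longleftrightarrow> (\<forall>j\<le>2. wins (game_add G (nimg j)) = (m \<noteq> j, m \<noteq> j))"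

lemma wins_add:
  "wins (game_add (Game L R) (Game L' R')) =
    ((\<exists>x\<in>set L. \<not> snd (wins (game_add x (Game L' R')))) \<or> (\<exists>y\<in>set L'. \<not> snd (wins (game_add (Game L R) y))),
     (\<exists>x\<in>set R. \<not> fst (wins (game_add x (Game L' R')))) \<or> (\<exists>y\<in>set R'. \<not> fst (wins (game_add (Game L R) y))))"
  by (auto simp: list_ex_iff)

lemma NV_at: "NV x i \<Longrightarrow> j \<le> 2 \<Longrightarrow> wins (game_add x (nimg j)) = (i \<noteq> j, i \<noteq> j)"
  unfolding NV_def by blast

lemma mex:
  assumes a1: "\<forall>x\<in>set xs. \<exists>i. NV x i \<and> i \<noteq> m"
    and a2: "\<forall>i<m. \<exists>x\<in>set xs. NV x i"
  shows "NV (Game xs xs) m"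
proof -
  have "wins (game_add (Game xs xs) (nimg j)) = (m\<noteq>j, m\<noteq>j)" if "j \<le> 2" for j
    using that
  proof (induction j rule: less_induct)
    case (less j)
    have e: "nimg j = Game (map nimg [0..<j]) (map nimg [0..<j])"
      using less.prems by (rule nimg_Game)
    have IH: "wins (game_add (Game xs xs) (nimg i)) = (m\<noteq>i, m\<noteq>i)" if "i < j" for i
      using less.IH less.prems that by simp
    have B1: "(\<exists>y\<in>set (map nimg [0..<j]). \<not> snd (wins (game_add (Game xs xs) y))) \<longleftrightarrow> m < j"
      using IH by auto
    have B2: "(\<exists>y\<in>set (map nimg [0..<j]). \<not> fst (wins (game_add (Game xs xs) y))) \<longleftrightarrow> m < j"
      using IH by auto
    have A1: "m \<noteq> j" if "x \<in> set xs" "\<not> snd (wins (game_add x (nimg j)))" for x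
    proof -
      from bspec[OF a1 that(1)] obtain i where "NV x i" "i \<noteq> m" by (elim exE conjE)
      then show ?thesis using NV_at[OF \<open>NV x i\<close> less.prems] that(2) by auto
    qed
    have A2: "m \<noteq> j" if "x \<in> set xs" "\<not> fst (wins (game_add x (nimg j)))" for x
    proof -
      from bspec[OF a1 that(1)] obtain i where "NV x i" "i \<noteq> m" by (elim exE conjE)
      then show ?thesis using NV_at[OF \<open>NV x i\<close> less.prems] that(2) by auto
    qed
    have A3: "(\<exists>x\<in>set xs. \<not> snd (wins (game_add x (nimg j))))
         \<and> (\<exists>x\<in>set xs. \<not> fst (wins (game_add x (nimg j))))" if "j < m"
    proof -
      from a2 that obtain x where "x \<in> set xs" "NV x j" by (elim allE[of _ j] impE bexE) auto
      have w: "wins (game_add x (nimg j)) = (False, False)" using NV_at[OF \<open>NV x j\<close> less.prems] by simp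
      show ?thesis by (intro conjI bexI[of _ x]) (simp_all add: w \<open>x \<in> set xs\<close>)
    qed
    have W: "wins (game_add (Game xs xs) (nimg j)) =
      ((\<exists>x\<in>set xs. \<not> snd (wins (game_add x (nimg j)))) \<or> (\<exists>y\<in>set (map nimg [0..<j]). \<not> snd (wins (game_add (Game xs xs) y))),
       (\<exists>x\<in>set xs. \<not> fst (wins (game_add x (nimg j)))) \<or> (\<exists>y\<in>set (map nimg [0..<j]). \<not> fst (wins (game_add (Game xs xs) y))))"
      using wins_add[of xs xs "map nimg [0..<j]" "map nimg [0..<j]"] unfolding e[symmetric] .
    have L1: "((\<exists>x\<in>set xs. \<not> snd (wins (game_add x (nimg j)))) \<or> m < j) = (m \<noteq> j)"
    proof
      assume "(\<exists>x\<in>set xs. \<not> snd (wins (game_add x (nimg j)))) \<or> m < j"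
      then show "m \<noteq> j" using A1 by auto
    next
      assume "m \<noteq> j" then have "m < j \<or> j < m" by arith
      then show "(\<exists>x\<in>set xs. \<not> snd (wins (game_add x (nimg j)))) \<or> m < j" using A3 by auto
    qed
    have L2: "((\<exists>x\<in>set xs. \<not> fst (wins (game_add x (nimg j)))) \<or> m < j) = (m \<noteq> j)"
    proof
      assume "(\<exists>x\<in>set xs. \<not> fst (wins (game_add x (nimg j)))) \<or> m < j"
      then show "m \<noteq> j" using A2 by auto
    next
      assume "m \<noteq> j" then have "m < j \<or> j < m" by arith
      then show "(\<exists>x\<in>set xs. \<not> fst (wins (game_add x (nimg j)))) \<or> m < j" using A3 by auto
    qed
    show ?case by (simp only: W B1 B2 L1 L2)
  qed
  then show ?thesis unfolding NV_def by blast
qed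

declare dom_game.simps[simp del]

abbreviation "DG n D \<equiv> dom_game {0..n} star_edge (\<lambda>_. ColC) D"

lemma dom_unfold:
  "DG n D = Game (map (\<lambda>v. DG n (D \<union> cnbhd {0..n} star_edge v)) (filter (playable {0..n} star_edge D) (sorted_list_of_set {0..n})))
                 (map (\<lambda>v. DG n (D \<union> cnbhd {0..n} star_edge v)) (filter (playable {0..n} star_edge D) (sorted_list_of_set {0..n})))"
  by (subst dom_game.simps) simp

lemma cn0: "cnbhd {0..n} star_edge 0 = {0..n}"
  by (auto simp: cnbhd_def star_edge_def)

lemma cnv: "v \<noteq> 0 \<Longrightarrow> v \<le> n \<Longrightarrow> cnbhd {0..n} star_edge v = {0, v}"
  by (auto simp: cnbhd_def star_edge_def)

lemma full: "NV (DG n {0..n}) 0"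
proof -
  have "filter (playable {0..n} star_edge {0..n}) (sorted_list_of_set {0..n}) = []"
    by (auto simp: filter_empty_conv playable_def cnbhd_def)
  then show ?thesis by (subst dom_unfold) (simp add: mex)
qed

definition nv :: "nat \<Rightarrow> nat" where
  "nv k = (if k = 0 then 0 else if odd k then 1 else 2)"

lemma main: "0 \<in> D \<Longrightarrow> D \<subseteq> {0..n} \<Longrightarrow> card ({0..n} - D) = k \<Longrightarrow> NV (DG n D) (nv k)"
proof (induction k arbitrary: D)
  case 0
  then have "D = {0..n}" by auto
  then show ?case using full by (simp add: nv_def)
next
  case (Suc k)
  obtain w where w: "w \<in> {0..n}" "w \<notin> D" using Suc.prems(3)
    by (metis Diff_iff card.empty ex_in_conv nat.distinct(1))
  have w0: "w \<noteq> 0"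
  proof
    assume "w = 0" then show False using w(2) Suc.prems(1) by simp
  qed
  have opts: "\<exists>i. NV (DG n (D \<union> cnbhd {0..n} star_edge v)) i \<and> i \<noteq> nv (Suc k)"
    if v: "v \<in> {0..n}" "playable {0..n} star_edge D v" for v
  proof (cases "v = 0")
    case True
    then have "D \<union> cnbhd {0..n} star_edge v = {0..n}" using Suc.prems(2) by (simp add: cn0 Un_absorb1)
    then show ?thesis using full[of n] by (intro exI[of _ 0]) (simp add: nv_def)
  next
    case False
    have vD: "v \<notin> D" using v False Suc.prems(1) by (auto simp: playable_def cnv)
    have eq: "D \<union> cnbhd {0..n} star_edge v = insert v D" using False v Suc.prems(1) by (auto simp: cnv)
    have "card ({0..n} - insert v D) = k" using Suc.prems(3) vD v
      by (metis Diff_insert card_Diff_singleton diff_Suc_1 finite_Diff finite_atLeastAtMost DiffI)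
    then have "NV (DG n (insert v D)) (nv k)" using Suc.IH Suc.prems v by auto
    moreover have "nv k \<noteq> nv (Suc k)" by (auto simp: nv_def)
    ultimately show ?thesis using eq by auto
  qed
  have p0: "playable {0..n} star_edge D 0" using w by (auto simp: playable_def cn0)
  have pw: "playable {0..n} star_edge D w" using w w0 by (auto simp: playable_def cnv)
  have o0: "NV (DG n (D \<union> cnbhd {0..n} star_edge 0)) 0" using full[of n] Suc.prems(2) by (simp add: cn0 Un_absorb1)
  have eqw: "D \<union> cnbhd {0..n} star_edge w = insert w D" using w0 w Suc.prems(1) by (auto simp: cnv)
  have "card ({0..n} - insert w D) = k" using Suc.prems(3) w
    by (metis Diff_insert card_Diff_singleton diff_Suc_1 finite_Diff finite_atLeastAtMost DiffI)
  then have ow: "NV (DG n (D \<union> cnbhd {0..n} star_edge w)) (nv k)"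
    using Suc.IH Suc.prems w eqw by auto
  have lt: "i < nv (Suc k) \<Longrightarrow> i = 0 \<or> i = nv k" for i by (auto simp: nv_def)
  show ?case
    apply (subst dom_unfold, rule mex)
    using opts apply auto[1]
    using lt o0 ow p0 pw w by fastforce
qed

lemma initial:
  assumes "n \<ge> 1"
  shows "NV (DG n {}) (if odd n then 1 else 2)"
proof -
  have opts: "\<exists>i. NV (DG n ({} \<union> cnbhd {0..n} star_edge v)) i \<and> i \<noteq> (if odd n then 1 else 2)"
    if v: "v \<in> {0..n}" for v
  proof (cases "v = 0")
    case True
    then show ?thesis using full[of n] by (intro exI[of _ 0]) (auto simp: cn0)
  next
    case False
    have "card ({0..n} - {0, v}) = n - 1" using False v
      by (simp add: card_Diff_subset)
    then have "NV (DG n {0, v}) (nv (n - 1))" using main[of "{0,v}" n] v by auto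
    moreover have "nv (n - 1) \<noteq> (if odd n then 1 else 2)" using assms by (auto simp: nv_def)
    ultimately show ?thesis using False v by (auto simp: cnv)
  qed
  have o0: "NV (DG n ({} \<union> cnbhd {0..n} star_edge 0)) 0" using full by (simp add: cn0)
  have "card ({0..n} - {0, 1}) = n - 1" using assms by (simp add: card_Diff_subset)
  then have o1: "NV (DG n ({} \<union> cnbhd {0..n} star_edge 1)) (nv (n - 1))"
    using main[of "{0,1}" n] assms by (auto simp: cnv)
  have p0: "playable {0..n} star_edge {} 0" by (auto simp: playable_def cn0)
  have p1: "playable {0..n} star_edge {} 1" using assms by (auto simp: playable_def cnv)
  have lt: "i < (if odd n then 1 else 2) \<Longrightarrow> i = 0 \<or> (i = nv (n - 1) \<and> 1 \<le> n)" for i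
    using assms by (auto simp: nv_def)
  show ?thesis
    apply (subst dom_unfold, rule mex)
    using opts apply auto[1]
    using lt o0 o1 p0 p1 assms by fastforce
qed

theorem theorem5:
  fixes n :: nat
  assumes "n \<ge> 1"
  shows "game_eq (domination_game {0..n} star_edge (\<lambda>_. ColC))
                 (if odd n then game_star else game_star2)"
proof -
  have neg: "game_neg (if odd n then game_star else game_star2) = nimg (if odd n then 1 else 2)"
    by (simp add: game_star_def game_star2_def game_zero_def numeral_2_eq_2)
  show ?thesis
    unfolding game_eq_def second_player_win_def domination_game_def neg
    using initial[OF assms] unfolding NV_def by auto
qed

end
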